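(* (i) If $\nu$ is a shift-invariant ergodic Borel probability measure on $\Sigma_\alpha$ with $\nu(\{\zeta\in\Sigma_\alpha:\zeta_0=\beta\})<\frac12$, then $\nu(\phi_\alpha(B_\alpha))=1$. (ii) If $\nu$ is a shift-invariant ergodic Borel probability measure on $\Sigma_\beta$ with $\nu(\{\zeta\in\Sigma_\beta:\zeta_0=\alpha\})<\frac12$, then $\nu(\phi_\beta(B_\beta))=1$.
   Context: Fix an integer $M\ge2$ and let $D=\{\alpha_1,\dots,\alpha_M,\beta_1,\dots,\beta_M\}$. Dyck shift. Consider the monoid with zero generated by $D$ with unit $1$ and relations $\alpha_i\beta_j=\delta_{ij}$ (Kronecker delta). The two-sided Dyck shift is $\Sigma_D=\{\omega\in D^{\mathbb Z}:\omega_j\omega_{j+1}\cdots\omega_k\ne0$ in this monoid for all $j<k\}$. Height functions. Let $s(\alpha_k)=1$ and $s(\beta_k)=-1$. For $\omega\in\Sigma_D$, the integers $H_i(\omega)$, $i\in\mathbb Z$, are determined by $H_0=0$ and $H_{i+1}(\omega)-H_i(\omega)=s(\omega_i)$. The sets $B_\alpha,B_\beta$. $B_\alpha$ is the set of $\omega\in\Sigma_D$ such that for every $i\in\mathbb Z$, either $\omega_i\in\{\alpha_1,\dots,\alpha_M\}$, or $\omega_i\in\{\beta_1,\dots,\beta_M\}$ and $H_{i-j+1}(\omega)=H_{i+1}(\omega)$ for some $j\ge1$. $B_\beta$ is the set of $\omega\in\Sigma_D$ such that for every $i$, either $\omega_i\in\{\beta_1,\dots,\beta_M\}$, or $\omega_i\in\{\alpha_1,\dots,\alpha_M\}$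 and $H_{i+j}(\omega)=H_i(\omega)$ for some $j\ge1$. Full shifts. $\Sigma_\alpha=\{\alpha_1,\dots,\alpha_M,\beta\}^{\mathbb Z}$ and $\Sigma_\beta=\{\alpha,\beta_1,\dots,\beta_M\}^{\mathbb Z}$ are full shifts with left shifts. $\phi_\alpha:B_\alpha\to\Sigma_\alpha$ replaces every symbol $\beta_k$ by $\beta$ (keeping $\alpha_k$). $\phi_\beta:B_\beta\to\Sigma_\beta$ replaces every $\alpha_k$ by $\alpha$ (keeping $\beta_k$). *)

theory Defs
  imports "HOL-Probability.Probability"
begin

text \<open>The Dyck alphabet D: DA k = alpha_k, DB k = beta_k, with 1 <= k <= M.\<close>
datatype dsym = DA nat | DB nat

definition Dalph :: "nat \<Rightarrow> dsym set" where
  "Dalph M = {DA k | k. 1 \<le> k \<and> k \<le> M} \<union> {DB k | k. 1 \<le> k \<and> k \<le> M}"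

text \<open>Alphabet of Sigma_alpha: alpha_1..alpha_M and a single symbol beta.\<close>
datatype asym = AA nat | AB

definition Aalph :: "nat \<Rightarrow> asym set" where
  "Aalph M = {AA k | k. 1 \<le> k \<and> k \<le> M} \<union> {AB}"

text \<open>Alphabet of Sigma_beta: a single symbol alpha and beta_1..beta_M.\<close>
datatype bsym = BA | BB nat

definition Balph :: "nat \<Rightarrow> bsym set" where
  "Balph M = {BA} \<union> {BB k | k. 1 \<le> k \<and> k \<le> M}"

text \<open>Elements of the free monoid with an adjoined zero: Some w (a word) or None (zero).
  dyck_eq is the congruence generated by the relations alpha_i beta_j = delta_ij
  (delta = 1 is the empty word, delta = 0 is the zero), together with 0 x = x 0 = 0.\<close>
inductive dyck_eq :: "dsym list option \<Rightarrow> dsym list option \<Rightarrow> bool" where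
  rel: "dyck_eq (Some (u @ [DA i, DB j] @ v))
          (if i = j then Some (u @ v) else None)"
| refl: "dyck_eq x x"
| sym: "dyck_eq x y \<Longrightarrow> dyck_eq y x"
| trans: "dyck_eq x y \<Longrightarrow> dyck_eq y z \<Longrightarrow> dyck_eq x z"

definition word_nonzero :: "dsym list \<Rightarrow> bool" where
  "word_nonzero w \<longleftrightarrow> \<not> dyck_eq (Some w) None"

definition Dyck_shift :: "nat \<Rightarrow> (int \<Rightarrow> dsym) set" where
  "Dyck_shift M = {\<omega>. (\<forall>i. \<omega> i \<in> Dalph M) \<and>
      (\<forall>j k. j < k \<longrightarrow> word_nonzero (map \<omega> [j..k]))}"

definition sgn_sym :: "dsym \<Rightarrow> int" where
  "sgn_sym x = (case x of DA _ \<Rightarrow> 1 | DB _ \<Rightarrow> -1)"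

text \<open>Height function: H 0 = 0 and H (i+1) - H i = s(omega_i).\<close>
definition H :: "(int \<Rightarrow> dsym) \<Rightarrow> int \<Rightarrow> int" where
  "H \<omega> i = (if 0 \<le> i then (\<Sum>k\<in>{0..<i}. sgn_sym (\<omega> k))
             else - (\<Sum>k\<in>{i..<0}. sgn_sym (\<omega> k)))"

definition is_alpha :: "dsym \<Rightarrow> bool" where
  "is_alpha x = (case x of DA _ \<Rightarrow> True | DB _ \<Rightarrow> False)"

definition is_beta :: "dsym \<Rightarrow> bool" where
  "is_beta x = (case x of DA _ \<Rightarrow> False | DB _ \<Rightarrow> True)"

definition B_alpha :: "nat \<Rightarrow> (int \<Rightarrow> dsym) set" where
  "B_alpha M = {\<omega> \<in> Dyck_shift M. \<forall>i. is_alpha (\<omega> i) \<or>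
       (is_beta (\<omega> i) \<and> (\<exists>j\<ge>1. H \<omega> (i - j + 1) = H \<omega> (i + 1)))}"

definition B_beta :: "nat \<Rightarrow> (int \<Rightarrow> dsym) set" where
  "B_beta M = {\<omega> \<in> Dyck_shift M. \<forall>i. is_beta (\<omega> i) \<or>
       (is_alpha (\<omega> i) \<and> (\<exists>j\<ge>1. H \<omega> (i + j) = H \<omega> i))}"

definition phi_alpha :: "(int \<Rightarrow> dsym) \<Rightarrow> (int \<Rightarrow> asym)" where
  "phi_alpha \<omega> = (\<lambda>i. case \<omega> i of DA k \<Rightarrow> AA k | DB _ \<Rightarrow> AB)"

definition phi_beta :: "(int \<Rightarrow> dsym) \<Rightarrow> (int \<Rightarrow> bsym)" where
  "phi_beta \<omega> = (\<lambda>i. case \<omega> i of DA _ \<Rightarrow> BA | DB k \<Rightarrow> BB k)"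

text \<open>Full shifts as measurable spaces: the product sigma-algebra on A^Z (A finite,
  discrete), which coincides with the Borel sigma-algebra of the product topology.\<close>
definition Sigma_alpha :: "nat \<Rightarrow> (int \<Rightarrow> asym) measure" where
  "Sigma_alpha M = PiM UNIV (\<lambda>_. count_space (Aalph M))"

definition Sigma_beta :: "nat \<Rightarrow> (int \<Rightarrow> bsym) measure" where
  "Sigma_beta M = PiM UNIV (\<lambda>_. count_space (Balph M))"

definition shift :: "(int \<Rightarrow> 'a) \<Rightarrow> (int \<Rightarrow> 'a)" where
  "shift \<omega> = (\<lambda>i. \<omega> (i + 1))"

definition shift_invariant :: "(int \<Rightarrow> 'a) measure \<Rightarrow> bool" where
  "shift_invariant \<nu> \<longleftrightarrow> shift \<in> measurable \<nu> \<nu> \<and>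
     (\<forall>A\<in>sets \<nu>. emeasure \<nu> (shift -` A \<inter> space \<nu>) = emeasure \<nu> A)"

definition shift_ergodic :: "(int \<Rightarrow> 'a) measure \<Rightarrow> bool" where
  "shift_ergodic \<nu> \<longleftrightarrow>
     (\<forall>A\<in>sets \<nu>. shift -` A \<inter> space \<nu> = A \<longrightarrow> emeasure \<nu> A = 0 \<or> emeasure \<nu> A = 1)"

end

theory Submission
  imports Defs
begin

definition Hg :: "('a \<Rightarrow> int) \<Rightarrow> (int \<Rightarrow> 'a) \<Rightarrow> int \<Rightarrow> int" where
  "Hg sg z i = (if 0 \<le> i then (\<Sum>k\<in>{0..<i}. sg (z k)) else - (\<Sum>k\<in>{i..<0}. sg (z k)))"

lemma Hg_0[simp]: "Hg sg z 0 = 0" by (simp add: Hg_def)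

lemma Hg_step: "Hg sg z (i+1) = Hg sg z i + sg (z i)"
proof (cases "0 \<le> i")
  case True
  have "{0..<i+1} = insert i {0..<i}" using True by auto
  then show ?thesis using True by (simp add: Hg_def)
next
  case False
  show ?thesis
  proof (cases "i = -1")
    case True
    have "{-1..<(0::int)} = {-1}" by auto
    then show ?thesis using True by (simp add: Hg_def)
  next
    case F2: False
    have "{i..<0} = insert i {i+1..<0}" using False by auto
    then show ?thesis using False F2 by (simp add: Hg_def)
  qed
qed

lemma H_eq: "H w = Hg sgn_sym w"
  by (rule ext) (simp add: H_def Hg_def)

lemma Hg_unique:
  assumes "G 0 = 0" "\<And>i. G (i+1) = G i + sg (z i)"
  shows "G i = Hg sg z i"
proof (induction i rule: int_induct[where k=0])
  case base then show ?case using assms by simp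
next
  case (step1 i) then show ?case using assms(2) Hg_step by metis
next
  case (step2 i) then show ?case using assms(2)[of "i-1"] Hg_step[of sg z "i-1"] by simp
qed

lemma Hg_shift: "Hg sg (shift z) m = Hg sg z (m+1) - Hg sg z 1"
proof -
  have "Hg sg z (m+1) - Hg sg z 1 = Hg sg (shift z) m"
  proof (rule Hg_unique)
    fix i show "Hg sg z (i + 1 + 1) - Hg sg z 1 = Hg sg z (i + 1) - Hg sg z 1 + sg (shift z i)"
      using Hg_step[of sg z "i+1"] by (simp add: shift_def)
  qed simp
  then show ?thesis by simp
qed

lemma Hg_lip:
  assumes "\<And>a. \<bar>sg a\<bar> \<le> 1"
  shows "\<bar>Hg sg z m\<bar> \<le> \<bar>m\<bar>"
proof (induction m rule: int_induct[where k=0])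
  case base then show ?case by simp
next
  case (step1 i) then show ?case using assms[of "z i"] Hg_step[of sg z i] by simp
next
  case (step2 i) then show ?case using assms[of "z (i-1)"] Hg_step[of sg z "i-1"] by simp
qed

lemma ivt_up:
  assumes "\<And>i. \<bar>G (i+1) - G i\<bar> \<le> (1::int)"
  shows "(a::int) \<le> b \<Longrightarrow> G a \<le> c \<Longrightarrow> c \<le> G b \<Longrightarrow> \<exists>t. a \<le> t \<and> t \<le> b \<and> G t = c"
proof (induction "nat (b - a)" arbitrary: a)
  case 0 then show ?case by auto
next
  case (Suc n)
  show ?case
  proof (cases "G a = c")
    case True then show ?thesis using Suc by auto
  next
    case False
    then have "G (a+1) \<le> c" using Suc.prems assms[of a] by auto
    moreover have "a + 1 \<le> b" using Suc.prems Suc.hyps False by auto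
    moreover have "n = nat (b - (a+1))" using Suc.hyps by auto
    ultimately obtain t where "a+1 \<le> t" "t \<le> b" "G t = c" using Suc.hyps Suc.prems by blast
    then show ?thesis by (intro exI[of _ t]) auto
  qed
qed

lemma ivt_down:
  assumes "\<And>i. \<bar>G (i+1) - G i\<bar> \<le> (1::int)"
  shows "(a::int) \<le> b \<Longrightarrow> G a \<ge> c \<Longrightarrow> c \<ge> G b \<Longrightarrow> \<exists>t. a \<le> t \<and> t \<le> b \<and> G t = c"
  using ivt_up[of "\<lambda>i. - G i" a b "-c"] assms by (force simp: abs_minus_commute)

fun runG :: "('x \<Rightarrow> 's \<Rightarrow> 's option) \<Rightarrow> 'x list \<Rightarrow> 's \<Rightarrow> 's option" where
  "runG f [] s = Some s"
| "runG f (x#w) s = (case f x s of None \<Rightarrow> None | Some s' \<Rightarrow> runG f w s')"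

lemma runG_append: "runG f (u@v) s = (case runG f u s of None \<Rightarrow> None | Some s' \<Rightarrow> runG f v s')"
  by (induct u arbitrary: s) (auto split: option.split)

fun stp1 :: "dsym \<Rightarrow> (nat \<Rightarrow> nat) \<Rightarrow> (nat \<Rightarrow> nat) option" where
  "stp1 (DA i) s = Some (case_nat i s)"
| "stp1 (DB j) s = (if s 0 = j then Some (\<lambda>n. s (Suc n)) else None)"

fun stp2 :: "dsym \<Rightarrow> (nat \<Rightarrow> nat) \<Rightarrow> (nat \<Rightarrow> nat) option" where
  "stp2 (DB j) s = Some (case_nat j s)"
| "stp2 (DA i) s = (if s 0 = i then Some (\<lambda>n. s (Suc n)) else None)"

fun J1 :: "dsym list option \<Rightarrow> (nat \<Rightarrow> nat) \<Rightarrow> (nat \<Rightarrow> nat) option" where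
  "J1 None = (\<lambda>_. None)"
| "J1 (Some w) = runG stp1 w"

fun J2 :: "dsym list option \<Rightarrow> (nat \<Rightarrow> nat) \<Rightarrow> (nat \<Rightarrow> nat) option" where
  "J2 None = (\<lambda>_. None)"
| "J2 (Some w) = runG stp2 (rev w)"

lemma dyck_J1: "dyck_eq x y \<Longrightarrow> J1 x = J1 y"
proof (induction rule: dyck_eq.induct)
  case (rel u i j v)
  show ?case
  proof (rule ext)
    fix s
    show "J1 (Some (u @ [DA i, DB j] @ v)) s = J1 (if i = j then Some (u @ v) else None) s"
      by (simp add: runG_append split: option.split)
  qed
qed auto

lemma dyck_J2: "dyck_eq x y \<Longrightarrow> J2 x = J2 y"
proof (induction rule: dyck_eq.induct)
  case (rel u i j v)
  show ?case
  proof (rule ext)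
    fix s
    show "J2 (Some (u @ [DA i, DB j] @ v)) s = J2 (if i = j then Some (u @ v) else None) s"
      by (simp add: runG_append split: option.split)
  qed
qed auto

lemma nonzero1: "runG stp1 w s \<noteq> None \<Longrightarrow> word_nonzero w"
  unfolding word_nonzero_def using dyck_J1[of "Some w" None] by (metis J1.simps)

lemma nonzero2: "runG stp2 (rev w) s \<noteq> None \<Longrightarrow> word_nonzero w"
  unfolding word_nonzero_def using dyck_J2[of "Some w" None] by (metis J2.simps)

lemma greatest_int:
  fixes P :: "int \<Rightarrow> bool"
  assumes "P p0" "\<And>p. P p \<Longrightarrow> p \<le> b"
  shows "P (GREATEST p. P p) \<and> (\<forall>p. P p \<longrightarrow> p \<le> (GREATEST p. P p))"
proof -
  let ?S = "{p. P p \<and> p0 \<le> p}"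
  have fin: "finite ?S" by (rule finite_subset[of _ "{p0..b}"]) (auto dest: assms(2))
  have ne: "p0 \<in> ?S" using assms by auto
  define g where "g = Max ?S"
  have g: "g \<in> ?S" unfolding g_def using fin ne Max_in by blast
  have gm: "\<And>p. P p \<Longrightarrow> p \<le> g"
  proof -
    fix p assume "P p"
    show "p \<le> g"
    proof (cases "p0 \<le> p")
      case True then show ?thesis using fin \<open>P p\<close> unfolding g_def by (auto intro: Max_ge)
    next
      case False then show ?thesis using g by auto
    qed
  qed
  have "(GREATEST p. P p) = g" by (rule Greatest_equality) (use g gm in auto)
  then show ?thesis using g gm by auto
qed

lemma least_int:
  fixes P :: "int \<Rightarrow> bool"
  assumes "P p0" "\<And>p. P p \<Longrightarrow> b \<le> p"
  shows "P (LEAST p. P p) \<and> (\<forall>p. P p \<longrightarrow> (LEAST p. P p) \<le> p)"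
proof -
  let ?S = "{p. P p \<and> p \<le> p0}"
  have fin: "finite ?S" by (rule finite_subset[of _ "{b..p0}"]) (auto dest: assms(2))
  have ne: "p0 \<in> ?S" using assms by auto
  define g where "g = Min ?S"
  have g: "g \<in> ?S" unfolding g_def using fin ne Min_in by blast
  have gm: "\<And>p. P p \<Longrightarrow> g \<le> p"
  proof -
    fix p assume "P p"
    show "g \<le> p"
    proof (cases "p \<le> p0")
      case True then show ?thesis using fin \<open>P p\<close> unfolding g_def by (auto intro: Min_le)
    next
      case False then show ?thesis using g by auto
    qed
  qed
  have "(LEAST p. P p) = g" by (rule Least_equality) (use g gm in auto)
  then show ?thesis using g gm by auto
qed

fun sa :: "asym \<Rightarrow> int" where "sa (AA _) = 1" | "sa AB = -1"
fun aidx :: "asym \<Rightarrow> nat" where "aidx (AA k) = k" | "aidx AB = 0"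

definition pz :: "(int \<Rightarrow> asym) \<Rightarrow> int \<Rightarrow> nat \<Rightarrow> int" where
  "pz z t n = (GREATEST p. p < t \<and> Hg sa z p = Hg sa z t - int n - 1)"

definition Sg1 :: "(int \<Rightarrow> asym) \<Rightarrow> int \<Rightarrow> nat \<Rightarrow> nat" where
  "Sg1 z t n = aidx (z (pz z t n))"

definition build1 :: "(int \<Rightarrow> asym) \<Rightarrow> int \<Rightarrow> dsym" where
  "build1 z i = (case z i of AA k \<Rightarrow> DA k | AB \<Rightarrow> DB (Sg1 z i 0))"

lemma sa_abs: "\<bar>sa a\<bar> \<le> 1" by (cases a) auto

lemma Hsa_step: "\<bar>Hg sa z (i+1) - Hg sa z i\<bar> \<le> 1"
  using Hg_step[of sa z i] sa_abs[of "z i"] by simp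

lemma step1: "stp1 (build1 z t) (Sg1 z t) = Some (Sg1 z (t+1))"
proof (cases "z t")
  case (AA k)
  have h: "Hg sa z (t+1) = Hg sa z t + 1" using Hg_step[of sa z t] AA by simp
  have "Sg1 z (t+1) = case_nat k (Sg1 z t)"
  proof
    fix n show "Sg1 z (t+1) n = case_nat k (Sg1 z t) n"
    proof (cases n)
      case 0
      have "pz z (t+1) 0 = t" unfolding pz_def by (rule Greatest_equality) (auto simp: h)
      then show ?thesis using 0 AA by (simp add: Sg1_def)
    next
      case (Suc m)
      have "(\<lambda>p. p < t + 1 \<and> Hg sa z p = Hg sa z (t+1) - int n - 1) =
            (\<lambda>p. p < t \<and> Hg sa z p = Hg sa z t - int m - 1)"
        using h Suc apply (auto simp: fun_eq_iff)
        apply (case_tac "x = t") apply auto done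
      then have "pz z (t+1) n = pz z t m" unfolding pz_def by simp
      then show ?thesis using Suc by (simp add: Sg1_def)
    qed
  qed
  then show ?thesis using AA by (simp add: build1_def)
next
  case AB
  have h: "Hg sa z (t+1) = Hg sa z t - 1" using Hg_step[of sa z t] AB by simp
  have "Sg1 z (t+1) = (\<lambda>n. Sg1 z t (Suc n))"
  proof
    fix n
    have "(\<lambda>p. p < t + 1 \<and> Hg sa z p = Hg sa z (t+1) - int n - 1) =
          (\<lambda>p. p < t \<and> Hg sa z p = Hg sa z t - int (Suc n) - 1)"
      using h apply (auto simp: fun_eq_iff)
        apply (case_tac "x = t") apply auto done
    then have "pz z (t+1) n = pz z t (Suc n)" unfolding pz_def by simp
    then show "Sg1 z (t+1) n = Sg1 z t (Suc n)" by (simp add: Sg1_def)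
  qed
  then show ?thesis using AB by (simp add: build1_def)
qed

lemma window1: "runG stp1 (map (build1 z) [a..a + int n - 1]) (Sg1 z a) = Some (Sg1 z (a + int n))"
proof (induction n arbitrary: a)
  case 0 then show ?case by simp
next
  case (Suc n)
  have "[a..a + int (Suc n) - 1] = a # [a+1..(a+1) + int n - 1]"
    by (subst upto_rec1) auto
  then show ?case using Suc[of "a+1"] step1[of z a] by (simp add: algebra_simps)
qed

lemma space_SA: "space (Sigma_alpha M) = {z. \<forall>i. z i \<in> Aalph M}"
  by (auto simp: Sigma_alpha_def space_PiM PiE_def Pi_def)

definition G1 :: "nat \<Rightarrow> (int \<Rightarrow> asym) set" where
  "G1 M = {z \<in> space (Sigma_alpha M). \<forall>i. z i = AB \<longrightarrow> (\<exists>j\<ge>1. Hg sa z (i-j+1) = Hg sa z (i+1))}"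

lemma sa_phi: "sa (phi_alpha w k) = sgn_sym (w k)"
  by (cases "w k") (auto simp: phi_alpha_def sgn_sym_def)

lemma H_phi: "H w = Hg sa (phi_alpha w)"
  unfolding H_eq by (rule ext) (simp add: Hg_def sa_phi)

lemma match1:
  assumes "z \<in> G1 M" "z i = AB"
  shows "\<exists>k. z (pz z i 0) = AA k"
proof -
  let ?H = "Hg sa z"
  let ?c = "?H i - 1"
  have hi: "?H (i+1) = ?c" using Hg_step[of sa z i] assms(2) by simp
  obtain j where j: "j \<ge> 1" "?H (i-j+1) = ?H (i+1)" using assms unfolding G1_def by auto
  have "i - j + 1 \<noteq> i" using j hi by auto
  then have "i-j+1 < i" using j by auto
  let ?P = "\<lambda>p. p < i \<and> ?H p = ?H i - int 0 - 1"
  have ex: "?P (i-j+1)" using j hi \<open>i-j+1 < i\<close> by simp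
  have "?P (GREATEST p. ?P p) \<and> (\<forall>p. ?P p \<longrightarrow> p \<le> (GREATEST p. ?P p))"
    by (rule greatest_int[of ?P "i-j+1" i]) (use ex in auto)
  then have G: "pz z i 0 < i" "?H (pz z i 0) = ?c" "\<And>p. p < i \<Longrightarrow> ?H p = ?c \<Longrightarrow> p \<le> pz z i 0"
    unfolding pz_def by auto
  let ?g = "pz z i 0"
  have "?H (?g+1) = ?c + 1"
  proof (cases "?g + 1 = i")
    case True then show ?thesis by simp
  next
    case False
    then have lt: "?g + 1 < i" using G by auto
    have ne: "?H (?g+1) \<noteq> ?c" using G(3)[OF lt] by auto
    have "\<bar>?H (?g+1) - ?c\<bar> \<le> 1" using Hsa_step[of z ?g] G(2) by simp
    moreover have "?H (?g+1) \<noteq> ?c - 1"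
    proof
      assume a: "?H (?g+1) = ?c - 1"
      obtain t where t: "?g + 1 \<le> t" "t \<le> i" "?H t = ?c"
        using ivt_up[of ?H "?g+1" i ?c] Hsa_step lt a by force
      then have "t \<noteq> i" by auto
      then show False using G(3)[of t] t by auto
    qed
    ultimately show ?thesis using ne by auto
  qed
  then have "sa (z ?g) = 1" using Hg_step[of sa z ?g] G(2) by simp
  then show ?thesis by (cases "z ?g") auto
qed

lemma image1: "phi_alpha ` B_alpha M = G1 M"
proof
  show "phi_alpha ` B_alpha M \<subseteq> G1 M"
  proof
    fix z assume "z \<in> phi_alpha ` B_alpha M"
    then obtain w where w: "w \<in> B_alpha M" "z = phi_alpha w" by auto
    have "z \<in> space (Sigma_alpha M)"
      unfolding space_SA
    proof (intro CollectI allI)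
      fix i
      have "w i \<in> Dalph M" using w(1) unfolding B_alpha_def Dyck_shift_def by auto
      then show "z i \<in> Aalph M" unfolding w(2) by (auto simp: Dalph_def Aalph_def phi_alpha_def)
    qed
    moreover have "\<forall>i. z i = AB \<longrightarrow> (\<exists>j\<ge>1. Hg sa z (i-j+1) = Hg sa z (i+1))"
    proof (intro allI impI)
      fix i assume "z i = AB"
      then have "\<not> is_alpha (w i)" using w(2) by (cases "w i") (auto simp: phi_alpha_def is_alpha_def)
      then show "\<exists>j\<ge>1. Hg sa z (i-j+1) = Hg sa z (i+1)"
        using w unfolding B_alpha_def by (auto simp: H_phi)
    qed
    ultimately show "z \<in> G1 M" unfolding G1_def by auto
  qed
next
  show "G1 M \<subseteq> phi_alpha ` B_alpha M"
  proof
    fix z assume z: "z \<in> G1 M"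
    let ?w = "build1 z"
    have zs: "\<And>i. z i \<in> Aalph M" using z unfolding G1_def space_SA by auto
    have ph: "phi_alpha ?w = z"
      by (rule ext) (auto simp: phi_alpha_def build1_def split: asym.split)
    have Hw: "H ?w = Hg sa z" using H_phi[of ?w] ph by simp
    have D: "\<And>i. ?w i \<in> Dalph M"
    proof -
      fix i show "?w i \<in> Dalph M"
      proof (cases "z i")
        case (AA k) then show ?thesis using zs[of i] by (auto simp: build1_def Dalph_def Aalph_def)
      next
        case AB
        obtain k where k: "z (pz z i 0) = AA k" using match1[OF z AB] by auto
        then have "1 \<le> k \<and> k \<le> M" using zs[of "pz z i 0"] by (auto simp: Aalph_def)
        then show ?thesis using AB k by (auto simp: build1_def Dalph_def Sg1_def)
      qed
    qed
    have NZ: "\<And>j k. j < k \<Longrightarrow> word_nonzero (map ?w [j..k])"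
    proof -
      fix j k :: int assume "j < k"
      then have "[j..k] = [j..j + int (nat (k - j + 1)) - 1]" by simp
      then show "word_nonzero (map ?w [j..k])"
        using window1[of z j "nat (k - j + 1)"] by (intro nonzero1[of _ "Sg1 z j"]) simp
    qed
    have "?w \<in> B_alpha M"
      unfolding B_alpha_def Dyck_shift_def
    proof (intro CollectI conjI allI impI)
      fix i
      show "is_alpha (?w i) \<or> is_beta (?w i) \<and> (\<exists>j\<ge>1. H ?w (i - j + 1) = H ?w (i + 1))"
      proof (cases "z i")
        case (AA k) then show ?thesis by (simp add: build1_def is_alpha_def)
      next
        case AB then show ?thesis using z unfolding G1_def Hw by (auto simp: build1_def is_beta_def)
      qed
    qed (use D NZ in auto)
    then show "z \<in> phi_alpha ` B_alpha M" using ph by force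
  qed
qed

fun sb :: "bsym \<Rightarrow> int" where "sb BA = 1" | "sb (BB _) = -1"
fun bidx :: "bsym \<Rightarrow> nat" where "bidx (BB k) = k" | "bidx BA = 0"

definition qz :: "(int \<Rightarrow> bsym) \<Rightarrow> int \<Rightarrow> nat \<Rightarrow> int" where
  "qz z t n = (LEAST q. t \<le> q \<and> Hg sb z (q+1) = Hg sb z t - int n - 1)"

definition Sg2 :: "(int \<Rightarrow> bsym) \<Rightarrow> int \<Rightarrow> nat \<Rightarrow> nat" where
  "Sg2 z t n = bidx (z (qz z t n))"

definition build2 :: "(int \<Rightarrow> bsym) \<Rightarrow> int \<Rightarrow> dsym" where
  "build2 z i = (case z i of BB k \<Rightarrow> DB k | BA \<Rightarrow> DA (Sg2 z (i+1) 0))"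

lemma sb_abs: "\<bar>sb a\<bar> \<le> 1" by (cases a) auto

lemma Hsb_step: "\<bar>Hg sb z (i+1) - Hg sb z i\<bar> \<le> 1"
  using Hg_step[of sb z i] sb_abs[of "z i"] by simp

lemma step2: "stp2 (build2 z t) (Sg2 z (t+1)) = Some (Sg2 z t)"
proof (cases "z t")
  case (BB k)
  have h: "Hg sb z (t+1) = Hg sb z t - 1" using Hg_step[of sb z t] BB by simp
  have "Sg2 z t = case_nat k (Sg2 z (t+1))"
  proof
    fix n show "Sg2 z t n = case_nat k (Sg2 z (t+1)) n"
    proof (cases n)
      case 0
      have "qz z t 0 = t" unfolding qz_def by (rule Least_equality) (auto simp: h)
      then show ?thesis using 0 BB by (simp add: Sg2_def)
    next
      case (Suc m)
      have "(\<lambda>q. t \<le> q \<and> Hg sb z (q+1) = Hg sb z t - int n - 1) =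
            (\<lambda>q. t + 1 \<le> q \<and> Hg sb z (q+1) = Hg sb z (t+1) - int m - 1)"
        using h Suc apply (auto simp: fun_eq_iff)
        apply (case_tac "x = t") apply auto done
      then have "qz z t n = qz z (t+1) m" unfolding qz_def by simp
      then show ?thesis using Suc by (simp add: Sg2_def)
    qed
  qed
  then show ?thesis using BB by (simp add: build2_def)
next
  case BA
  have h: "Hg sb z (t+1) = Hg sb z t + 1" using Hg_step[of sb z t] BA by simp
  have "Sg2 z t = (\<lambda>n. Sg2 z (t+1) (Suc n))"
  proof
    fix n
    have "(\<lambda>q. t \<le> q \<and> Hg sb z (q+1) = Hg sb z t - int n - 1) =
          (\<lambda>q. t + 1 \<le> q \<and> Hg sb z (q+1) = Hg sb z (t+1) - int (Suc n) - 1)"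
      using h apply (auto simp: fun_eq_iff)
        apply (case_tac "x = t") apply auto done
    then have "qz z t n = qz z (t+1) (Suc n)" unfolding qz_def by simp
    then show "Sg2 z t n = Sg2 z (t+1) (Suc n)" by (simp add: Sg2_def)
  qed
  then show ?thesis using BA by (simp add: build2_def)
qed

lemma window2: "runG stp2 (rev (map (build2 z) [a..a + int n - 1])) (Sg2 z (a + int n)) = Some (Sg2 z a)"
proof (induction n arbitrary: a)
  case 0 then show ?case by simp
next
  case (Suc n)
  have "[a..a + int (Suc n) - 1] = a # [a+1..(a+1) + int n - 1]"
    by (subst upto_rec1) auto
  then show ?case using Suc[of "a+1"] step2[of z a] by (simp add: runG_append algebra_simps)
qed

lemma space_SB: "space (Sigma_beta M) = {z. \<forall>i. z i \<in> Balph M}"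
  by (auto simp: Sigma_beta_def space_PiM PiE_def Pi_def)

definition G2 :: "nat \<Rightarrow> (int \<Rightarrow> bsym) set" where
  "G2 M = {z \<in> space (Sigma_beta M). \<forall>i. z i = BA \<longrightarrow> (\<exists>j\<ge>1. Hg sb z (i+j) = Hg sb z i)}"

lemma sb_phi: "sb (phi_beta w k) = sgn_sym (w k)"
  by (cases "w k") (auto simp: phi_beta_def sgn_sym_def)

lemma H_phib: "H w = Hg sb (phi_beta w)"
  unfolding H_eq by (rule ext) (simp add: Hg_def sb_phi)

lemma match2:
  assumes "z \<in> G2 M" "z i = BA"
  shows "\<exists>k. z (qz z (i+1) 0) = BB k"
proof -
  let ?H = "Hg sb z"
  let ?c = "?H i"
  have hi: "?H (i+1) = ?c + 1" using Hg_step[of sb z i] assms(2) by simp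
  obtain j where j: "j \<ge> 1" "?H (i+j) = ?c" using assms unfolding G2_def by auto
  have "j \<noteq> 1" using j hi by auto
  then have j2: "i + 1 \<le> i + j - 1" using j by auto
  let ?P = "\<lambda>q. i + 1 \<le> q \<and> ?H (q+1) = ?H (i+1) - int 0 - 1"
  have ex: "?P (i+j-1)" using j hi j2 by simp
  have "?P (LEAST p. ?P p) \<and> (\<forall>p. ?P p \<longrightarrow> (LEAST p. ?P p) \<le> p)"
    by (rule least_int[of ?P "i+j-1" "i+1"]) (use ex in auto)
  then have G: "i + 1 \<le> qz z (i+1) 0" "?H (qz z (i+1) 0 + 1) = ?c"
     "\<And>p. i + 1 \<le> p \<Longrightarrow> ?H (p+1) = ?c \<Longrightarrow> qz z (i+1) 0 \<le> p"
    unfolding qz_def using hi by auto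
  let ?g = "qz z (i+1) 0"
  have "?H ?g = ?c + 1"
  proof (cases "?g = i + 1")
    case True then show ?thesis using hi by simp
  next
    case False
    then have lt: "i + 1 < ?g" using G by auto
    have ne: "?H ?g \<noteq> ?c" using G(3)[of "?g - 1"] lt by auto
    have "\<bar>?H ?g - ?c\<bar> \<le> 1" using Hsb_step[of z ?g] G(2) by simp
    moreover have "?H ?g \<noteq> ?c - 1"
    proof
      assume a: "?H ?g = ?c - 1"
      obtain t where t: "i + 1 \<le> t" "t \<le> ?g" "?H t = ?c"
        using ivt_down[of ?H "i+1" ?g ?c] Hsb_step lt a hi by force
      then have "t \<noteq> i + 1" using hi by auto
      then show False using G(3)[of "t - 1"] t by auto
    qed
    ultimately show ?thesis using ne by auto
  qed
  then have "sb (z ?g) = -1" using Hg_step[of sb z ?g] G(2) by simp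
  then show ?thesis by (cases "z ?g") auto
qed

lemma image2: "phi_beta ` B_beta M = G2 M"
proof
  show "phi_beta ` B_beta M \<subseteq> G2 M"
  proof
    fix z assume "z \<in> phi_beta ` B_beta M"
    then obtain w where w: "w \<in> B_beta M" "z = phi_beta w" by auto
    have "z \<in> space (Sigma_beta M)"
      unfolding space_SB
    proof (intro CollectI allI)
      fix i
      have "w i \<in> Dalph M" using w(1) unfolding B_beta_def Dyck_shift_def by auto
      then show "z i \<in> Balph M" unfolding w(2) by (auto simp: Dalph_def Balph_def phi_beta_def)
    qed
    moreover have "\<forall>i. z i = BA \<longrightarrow> (\<exists>j\<ge>1. Hg sb z (i+j) = Hg sb z i)"
    proof (intro allI impI)
      fix i assume "z i = BA"
      then have "\<not> is_beta (w i)" using w(2) by (cases "w i") (auto simp: phi_beta_def is_beta_def)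
      then show "\<exists>j\<ge>1. Hg sb z (i+j) = Hg sb z i"
        using w unfolding B_beta_def by (auto simp: H_phib)
    qed
    ultimately show "z \<in> G2 M" unfolding G2_def by auto
  qed
next
  show "G2 M \<subseteq> phi_beta ` B_beta M"
  proof
    fix z assume z: "z \<in> G2 M"
    let ?w = "build2 z"
    have zs: "\<And>i. z i \<in> Balph M" using z unfolding G2_def space_SB by auto
    have ph: "phi_beta ?w = z"
      by (rule ext) (auto simp: phi_beta_def build2_def split: bsym.split)
    have Hw: "H ?w = Hg sb z" using H_phib[of ?w] ph by simp
    have D: "\<And>i. ?w i \<in> Dalph M"
    proof -
      fix i show "?w i \<in> Dalph M"
      proof (cases "z i")
        case (BB k) then show ?thesis using zs[of i] by (auto simp: build2_def Dalph_def Balph_def)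
      next
        case BA
        obtain k where k: "z (qz z (i+1) 0) = BB k" using match2[OF z BA] by auto
        then have "1 \<le> k \<and> k \<le> M" using zs[of "qz z (i+1) 0"] by (auto simp: Balph_def)
        then show ?thesis using BA k by (auto simp: build2_def Dalph_def Sg2_def)
      qed
    qed
    have NZ: "\<And>j k. j < k \<Longrightarrow> word_nonzero (map ?w [j..k])"
    proof -
      fix j k :: int assume "j < k"
      then have "[j..k] = [j..j + int (nat (k - j + 1)) - 1]" by simp
      then show "word_nonzero (map ?w [j..k])"
        using window2[of z j "nat (k - j + 1)"] by (intro nonzero2[of _ "Sg2 z (j + int (nat (k - j + 1)))"]) simp
    qed
    have "?w \<in> B_beta M"
      unfolding B_beta_def Dyck_shift_def
    proof (intro CollectI conjI allI impI)
      fix i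
      show "is_beta (?w i) \<or> is_alpha (?w i) \<and> (\<exists>j\<ge>1. H ?w (i + j) = H ?w i)"
      proof (cases "z i")
        case (BB k) then show ?thesis by (simp add: build2_def is_beta_def)
      next
        case BA then show ?thesis using z unfolding G2_def Hw by (auto simp: build2_def is_alpha_def)
      qed
    qed (use D NZ in auto)
    then show "z \<in> phi_beta ` B_beta M" using ph by force
  qed
qed

locale shsys =
  fixes nu :: "(int \<Rightarrow> 'a) measure" and A :: "'a set" and sg :: "'a \<Rightarrow> int"
  assumes sets_nu: "sets nu = sets (PiM UNIV (\<lambda>_. count_space A))"
    and prob: "prob_space nu"
    and inv: "shift_invariant nu"
    and erg: "shift_ergodic nu"
    and sg1: "\<And>a. sg a = 1 \<or> sg a = -1"
begin

lemma comp_meas: "(\<lambda>z. z k) \<in> measurable nu (count_space A)"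
  using measurable_component_singleton[of k UNIV "\<lambda>_. count_space A"]
  by (simp add: measurable_cong_sets[OF sets_nu HOL.refl])

lemma sg_meas[measurable]: "(\<lambda>z. real_of_int (sg (z k))) \<in> borel_measurable nu"
  by (rule measurable_compose[OF comp_meas]) (simp add: measurable_count_space_eq1)

lemma Hg_meas[measurable]: "(\<lambda>z. real_of_int (Hg sg z m)) \<in> borel_measurable nu"
  unfolding Hg_def by (cases "0 \<le> m") (simp_all add: of_int_sum)

lemma P_meas[measurable]: "Measurable.pred nu (\<lambda>z. \<forall>m::int. m \<le> 0 \<longrightarrow> - real n \<le> real_of_int (Hg sg z m))"
proof (rule pred_intros_countable(1))
  fix m :: int
  show "Measurable.pred nu (\<lambda>z. m \<le> 0 \<longrightarrow> - real n \<le> real_of_int (Hg sg z m))"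
    by measurable
qed

end

lemma core_arith:
  fixes x y :: nat and r :: real and N :: nat
  assumes "real y \<ge> real x + r" "r \<le> 1" "r \<ge> -1"
  shows "min (real y) (real N) - min (real x) (real N) \<ge> r - 2 * (if N \<le> x then 1 else 0)"
proof (cases "N \<le> x")
  case True then show ?thesis using assms by auto
next
  case False
  then have "real x + 1 \<le> real N" by simp
  then show ?thesis using assms False by auto
qed

lemma core:
  fixes M :: "'b measure" and x y :: "'b \<Rightarrow> nat" and r :: "'b \<Rightarrow> real"
  assumes P: "prob_space M"
    and xm: "x \<in> measurable M (count_space UNIV)" and ym: "y \<in> measurable M (count_space UNIV)"
    and rm: "r \<in> borel_measurable M" and rb: "\<And>z. z \<in> space M \<Longrightarrow> r z \<le> 1 \<and> r z \<ge> -1"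
    and eq: "\<And>N::nat. (\<integral>z. min (real (y z)) (real N) \<partial>M) = (\<integral>z. min (real (x z)) (real N) \<partial>M)"
    and ae: "AE z in M. real (y z) \<ge> real (x z) + r z"
  shows "(\<integral>z. r z \<partial>M) \<le> 0"
proof -
  interpret prob_space M by (rule P)
  have rx: "(\<lambda>z. real (x z)) \<in> borel_measurable M"
    by (rule measurable_compose[OF xm]) simp
  have ry: "(\<lambda>z. real (y z)) \<in> borel_measurable M"
    by (rule measurable_compose[OF ym]) simp
  define A where "A N = {z \<in> space M. N \<le> x z}" for N
  have Am: "A N \<in> sets M" for N
  proof -
    have "A N = x -` {N..} \<inter> space M" unfolding A_def by auto
    then show ?thesis using xm by (auto simp: measurable_def)
  qed
  have bound: "(\<integral>z. r z \<partial>M) \<le> 2 * measure M (A N)" for N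
  proof -
    let ?g = "\<lambda>z. min (real (y z)) (real N) - min (real (x z)) (real N)"
    let ?h = "\<lambda>z. r z - 2 * indicator (A N) z"
    have ig1: "integrable M (\<lambda>z. min (real (y z)) (real N))"
      by (rule integrable_const_bound[where B="real N"]) (use ry in auto)
    have ig2: "integrable M (\<lambda>z. min (real (x z)) (real N))"
      by (rule integrable_const_bound[where B="real N"]) (use rx in auto)
    have ir: "integrable M r"
      by (rule integrable_const_bound[where B=1]) (use rm rb in \<open>auto simp: abs_le_iff\<close>)
    have ii: "integrable M (indicator (A N) :: 'b \<Rightarrow> real)"
      using Am[of N] sets.sets_into_space[OF Am[of N]]
      by (simp add: integrable_indicator_iff Int_absorb2 less_top[symmetric])
    have "AE z in M. ?h z \<le> ?g z"
      using ae
    proof (rule AE_mp)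
      show "AE z in M. real (x z) + r z \<le> real (y z) \<longrightarrow> ?h z \<le> ?g z"
      proof (rule AE_I2, rule impI)
        fix z assume z: "z \<in> space M" and h: "real (x z) + r z \<le> real (y z)"
        show "?h z \<le> ?g z"
          using core_arith[OF h, of N] rb[OF z] z unfolding A_def by (auto simp: indicator_def)
      qed
    qed
    then have "(\<integral>z. ?h z \<partial>M) \<le> (\<integral>z. ?g z \<partial>M)"
      by (intro integral_mono_AE) (use ig1 ig2 ir ii in auto)
    also have "(\<integral>z. ?g z \<partial>M) = 0" using eq[of N] ig1 ig2 by simp
    finally have "(\<integral>z. ?h z \<partial>M) \<le> 0" .
    moreover have "(\<integral>z. ?h z \<partial>M) = (\<integral>z. r z \<partial>M) - 2 * measure M (A N)"
      using ir ii Am by (simp add: Int_absorb2 sets.sets_into_space)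
    ultimately show ?thesis by simp
  qed
  have lim: "(\<lambda>N. measure M (A N)) \<longlonglongrightarrow> measure M (\<Inter>N. A N)"
  proof (rule finite_Lim_measure_decseq)
    show "range A \<subseteq> sets M" using Am by auto
    show "decseq A" by (auto simp: decseq_def A_def)
  qed
  have "(\<Inter>N. A N) = {}"
  proof -
    have "z \<notin> A (Suc (x z))" for z unfolding A_def by auto
    then show ?thesis by blast
  qed
  then have "(\<lambda>N. 2 * measure M (A N)) \<longlonglongrightarrow> 2 * 0"
    using lim by (intro tendsto_mult tendsto_const) simp
  then show ?thesis
    using bound by (intro LIMSEQ_le_const[where X="\<lambda>N. 2 * measure M (A N)"]) auto
qed

context shsys begin

lemma shift_meas: "shift \<in> measurable nu nu" using inv unfolding shift_invariant_def by auto

lemma distr_eq: "distr nu nu shift = nu"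
proof (rule measure_eqI)
  show "sets (distr nu nu shift) = sets nu" by simp
  fix X assume "X \<in> sets (distr nu nu shift)"
  then show "emeasure (distr nu nu shift) X = emeasure nu X"
    using inv shift_meas unfolding shift_invariant_def by (simp add: emeasure_distr)
qed

lemma int_shift:
  fixes g :: "_ \<Rightarrow> real"
  assumes "g \<in> borel_measurable nu"
  shows "(\<integral>z. g (shift z) \<partial>nu) = (\<integral>z. g z \<partial>nu)"
  using integral_distr[OF shift_meas assms] distr_eq by simp

lemma shift_space: "z \<in> space nu \<Longrightarrow> shift z \<in> space nu"
  using shift_meas by (auto simp: measurable_def)

lemma Hg1: "Hg sg z 1 = sg (z 0)"
  using Hg_step[of sg z 0] by simp

lemma sg_bd: "\<bar>sg a\<bar> \<le> 1" using sg1[of a] by auto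

lemma sg_int_real: "(\<lambda>z. real_of_int (sg (z 0))) \<in> borel_measurable nu" by measurable

definition Pb :: "(int \<Rightarrow> 'a) \<Rightarrow> nat \<Rightarrow> bool" where
  "Pb z n \<longleftrightarrow> (\<forall>m::int. m \<le> 0 \<longrightarrow> - int n \<le> Hg sg z m)"

lemma Pb_meas[measurable]: "Measurable.pred nu (\<lambda>z. Pb z n)"
proof -
  have "Pb z n = (\<forall>m::int. m \<le> 0 \<longrightarrow> - real n \<le> real_of_int (Hg sg z m))" for z
    unfolding Pb_def by (metis of_int_le_iff of_int_minus of_int_of_nat_eq)
  then show ?thesis using P_meas[of n] by simp
qed

definition Eb where "Eb = {z \<in> space nu. \<exists>n. Pb z n}"
definition fb where "fb z = (LEAST n. Pb z n)"

lemma Eb_meas: "Eb \<in> sets nu" unfolding Eb_def by measurable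

lemma fb_meas: "fb \<in> measurable nu (count_space UNIV)"
  unfolding fb_def by measurable

lemma Pb_shift1: "Pb z n \<Longrightarrow> Pb (shift z) (n+2)"
  unfolding Pb_def
proof (intro allI impI)
  fix m :: int assume P: "\<forall>m\<le>0. - int n \<le> Hg sg z m" and m: "m \<le> 0"
  show "- int (n + 2) \<le> Hg sg (shift z) m"
  proof (cases "m = 0")
    case True then show ?thesis by simp
  next
    case False
    then show ?thesis using P[rule_format, of "m+1"] m Hg_shift[of sg z m] Hg1[of z] sg_bd[of "z 0"] by auto
  qed
qed

lemma Pb_shift2: "Pb (shift z) k \<Longrightarrow> Pb z (nat (int k - sg (z 0)))"
  unfolding Pb_def
proof (intro allI impI)
  fix m :: int assume P: "\<forall>m\<le>0. - int k \<le> Hg sg (shift z) m" and m: "m \<le> 0"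
  have a: "Hg sg z m = Hg sg (shift z) (m - 1) + sg (z 0)" using Hg_shift[of sg z "m-1"] Hg1[of z] by simp
  have b: "- int k \<le> - sg (z 0)" using P[rule_format, of "-1"] Hg_shift[of sg z "-1"] Hg1[of z] by simp
  show "- int (nat (int k - sg (z 0))) \<le> Hg sg z m" using a b P[rule_format, of "m-1"] m by simp
qed

lemma Eb_inv: "shift -` Eb \<inter> space nu = Eb"
  unfolding Eb_def using Pb_shift1 Pb_shift2 shift_space by blast

lemma fb_ineq:
  assumes "z \<in> Eb"
  shows "real (fb (shift z)) \<ge> real (fb z) + real_of_int (sg (z 0))"
proof -
  obtain n where "Pb z n" using assms unfolding Eb_def by auto
  then have "Pb (shift z) (n+2)" by (rule Pb_shift1)
  then have k: "Pb (shift z) (fb (shift z))" unfolding fb_def by (rule LeastI)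
  have "- int (fb (shift z)) \<le> Hg sg (shift z) (-1)" using k unfolding Pb_def by auto
  then have b: "- int (fb (shift z)) \<le> - sg (z 0)"
    using Hg_shift[of sg z "-1"] Hg1[of z] by simp
  have "fb z \<le> nat (int (fb (shift z)) - sg (z 0))"
    using Pb_shift2[OF k] unfolding fb_def by (rule Least_le)
  then have "int (fb z) \<le> int (fb (shift z)) - sg (z 0)" using b by simp
  then show ?thesis by linarith
qed

lemma backward:
  assumes pos: "(\<integral>z. real_of_int (sg (z 0)) \<partial>nu) > 0"
  shows "emeasure nu Eb = 0"
proof (rule ccontr)
  interpret prob_space nu by (rule prob)
  assume ne: "emeasure nu Eb \<noteq> 0"
  have "emeasure nu Eb = 1" using erg Eb_meas Eb_inv ne unfolding shift_ergodic_def by blast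
  then have "prob Eb = 1" by (simp add: emeasure_eq_measure)
  then have ae: "AE z in nu. z \<in> Eb" by (rule AE_prob_1)
  have fsm: "(\<lambda>z. fb (shift z)) \<in> measurable nu (count_space UNIV)"
    by (rule measurable_compose[OF shift_meas fb_meas])
  have "(\<integral>z. real_of_int (sg (z 0)) \<partial>nu) \<le> 0"
  proof (rule core[OF prob fb_meas fsm sg_int_real])
    fix z show "real_of_int (sg (z 0)) \<le> 1 \<and> -1 \<le> real_of_int (sg (z 0))"
      using sg_bd[of "z 0"] by (simp add: abs_le_iff)
  next
    fix N :: nat
    show "(\<integral>z. min (real (fb (shift z))) (real N) \<partial>nu) = (\<integral>z. min (real (fb z)) (real N) \<partial>nu)"
    proof (rule int_shift)
      have "(\<lambda>z. real (fb z)) \<in> borel_measurable nu"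
        by (rule measurable_compose[OF fb_meas]) simp
      then show "(\<lambda>z. min (real (fb z)) (real N)) \<in> borel_measurable nu" by measurable
    qed
  next
    show "AE z in nu. real (fb z) + real_of_int (sg (z 0)) \<le> real (fb (shift z))"
      using ae by (rule AE_mp) (auto intro!: AE_I2 fb_ineq)
  qed
  then show False using pos by simp
qed

definition Pf :: "(int \<Rightarrow> 'a) \<Rightarrow> nat \<Rightarrow> bool" where
  "Pf z n \<longleftrightarrow> (\<forall>m::int. 0 \<le> m \<longrightarrow> - int n \<le> Hg sg z m)"

lemma Pf_meas[measurable]: "Measurable.pred nu (\<lambda>z. Pf z n)"
proof -
  have "Pf z n = (\<forall>m::int. 0 \<le> m \<longrightarrow> - real n \<le> real_of_int (Hg sg z m))" for z
    unfolding Pf_def by (metis of_int_le_iff of_int_minus of_int_of_nat_eq)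
  moreover have "Measurable.pred nu (\<lambda>z. \<forall>m::int. 0 \<le> m \<longrightarrow> - real n \<le> real_of_int (Hg sg z m))"
  proof (rule pred_intros_countable(1))
    fix m :: int
    show "Measurable.pred nu (\<lambda>z. 0 \<le> m \<longrightarrow> - real n \<le> real_of_int (Hg sg z m))"
      by measurable
  qed
  ultimately show ?thesis by simp
qed

definition Ef where "Ef = {z \<in> space nu. \<exists>n. Pf z n}"
definition ff where "ff z = (LEAST n. Pf z n)"

lemma Ef_meas: "Ef \<in> sets nu" unfolding Ef_def by measurable

lemma ff_meas: "ff \<in> measurable nu (count_space UNIV)"
  unfolding ff_def by measurable

lemma Pf_shift1: "Pf z n \<Longrightarrow> Pf (shift z) (nat (int n + sg (z 0)))"
  unfolding Pf_def
proof (intro allI impI)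
  fix m :: int assume P: "\<forall>m\<ge>0. - int n \<le> Hg sg z m" and m: "0 \<le> m"
  have b: "- int n \<le> sg (z 0)" using P[rule_format, of 1] Hg1[of z] by simp
  show "- int (nat (int n + sg (z 0))) \<le> Hg sg (shift z) m"
    using P[rule_format, of "m+1"] m Hg_shift[of sg z m] Hg1[of z] b by simp
qed

lemma Pf_shift2: "Pf (shift z) k \<Longrightarrow> Pf z (k+1)"
  unfolding Pf_def
proof (intro allI impI)
  fix m :: int assume P: "\<forall>m\<ge>0. - int k \<le> Hg sg (shift z) m" and m: "0 \<le> m"
  show "- int (k + 1) \<le> Hg sg z m"
  proof (cases "m = 0")
    case True then show ?thesis by simp
  next
    case False
    have a: "Hg sg z m = Hg sg (shift z) (m - 1) + sg (z 0)" using Hg_shift[of sg z "m-1"] Hg1[of z] by simp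
    then show ?thesis using P[rule_format, of "m-1"] m False sg_bd[of "z 0"] by auto
  qed
qed

lemma Ef_inv: "shift -` Ef \<inter> space nu = Ef"
  unfolding Ef_def using Pf_shift1 Pf_shift2 shift_space by blast

lemma ff_ineq:
  assumes "z \<in> Ef"
  shows "real (ff z) \<ge> real (ff (shift z)) + real_of_int (- sg (z 0))"
proof -
  obtain n where "Pf z n" using assms unfolding Ef_def by auto
  then have k: "Pf z (ff z)" unfolding ff_def by (rule LeastI)
  have "- int (ff z) \<le> Hg sg z 1" using k unfolding Pf_def by auto
  then have b: "- int (ff z) \<le> sg (z 0)" using Hg1[of z] by simp
  have "ff (shift z) \<le> nat (int (ff z) + sg (z 0))"
    using Pf_shift1[OF k] unfolding ff_def by (rule Least_le)
  then have "int (ff (shift z)) \<le> int (ff z) + sg (z 0)" using b by simp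
  then show ?thesis by linarith
qed

lemma forward:
  assumes neg: "(\<integral>z. real_of_int (sg (z 0)) \<partial>nu) < 0"
  shows "emeasure nu Ef = 0"
proof (rule ccontr)
  interpret prob_space nu by (rule prob)
  assume ne: "emeasure nu Ef \<noteq> 0"
  have "emeasure nu Ef = 1" using erg Ef_meas Ef_inv ne unfolding shift_ergodic_def by blast
  then have "prob Ef = 1" by (simp add: emeasure_eq_measure)
  then have ae: "AE z in nu. z \<in> Ef" by (rule AE_prob_1)
  have fsm: "(\<lambda>z. ff (shift z)) \<in> measurable nu (count_space UNIV)"
    by (rule measurable_compose[OF shift_meas ff_meas])
  have rm: "(\<lambda>z. real_of_int (- sg (z 0))) \<in> borel_measurable nu"
    using sg_int_real by simp
  have "(\<integral>z. real_of_int (- sg (z 0)) \<partial>nu) \<le> 0"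
  proof (rule core[OF prob fsm ff_meas rm])
    fix z show "real_of_int (- sg (z 0)) \<le> 1 \<and> -1 \<le> real_of_int (- sg (z 0))"
      using sg_bd[of "z 0"] by (simp add: abs_le_iff)
  next
    fix N :: nat
    show "(\<integral>z. min (real (ff z)) (real N) \<partial>nu) = (\<integral>z. min (real (ff (shift z))) (real N) \<partial>nu)"
    proof (rule HOL.sym, rule int_shift)
      have "(\<lambda>z. real (ff z)) \<in> borel_measurable nu"
        by (rule measurable_compose[OF ff_meas]) simp
      then show "(\<lambda>z. min (real (ff z)) (real N)) \<in> borel_measurable nu" by measurable
    qed
  next
    show "AE z in nu. real (ff (shift z)) + real_of_int (- sg (z 0)) \<le> real (ff z)"
      using ae by (rule AE_mp) (auto intro!: AE_I2 dest: ff_ineq)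
  qed
  then show False using neg by simp
qed

end

context shsys begin

lemma coord_set: "{z \<in> space nu. z k = c} \<in> sets nu"
proof -
  have "{z \<in> space nu. z k = c} = (\<lambda>z. z k) -` ({c} \<inter> A) \<inter> space nu"
    using measurable_space[OF comp_meas[of k]] by auto
  also have "\<dots> \<in> sets nu" by (rule measurable_sets[OF comp_meas]) auto
  finally show ?thesis .
qed

lemma coord_pred[measurable]: "Measurable.pred nu (\<lambda>z. z k = c)"
  unfolding pred_def by (rule coord_set)

lemma Hg_eq_pred[measurable]: "Measurable.pred nu (\<lambda>z. Hg sg z a = Hg sg z b)"
proof -
  have "{z \<in> space nu. real_of_int (Hg sg z a) = real_of_int (Hg sg z b)} \<in> sets nu"
    by (rule borel_measurable_eq) (rule Hg_meas)+
  then show ?thesis unfolding pred_def by simp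
qed

lemma int_sg:
  assumes "\<And>a. sg a = (if a = c then d else e)"
  shows "(\<integral>z. real_of_int (sg (z 0)) \<partial>nu) = e + (d - e) * measure nu {z \<in> space nu. z 0 = c}"
proof -
  interpret prob_space nu by (rule prob)
  let ?S = "{z \<in> space nu. z 0 = c}"
  have "(\<integral>z. real_of_int (sg (z 0)) \<partial>nu) = (\<integral>z. real_of_int e + real_of_int (d - e) * indicator ?S z \<partial>nu)"
    by (rule Bochner_Integration.integral_cong[OF HOL.refl]) (auto simp: assms indicator_def)
  also have "\<dots> = (\<integral>z. real_of_int e \<partial>nu) + (\<integral>z. real_of_int (d - e) * indicator ?S z \<partial>nu)"
  proof (rule Bochner_Integration.integral_add)
    show "integrable nu (\<lambda>z. real_of_int (d - e) * indicator ?S z)"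
      using coord_set[of 0 c] by (intro integrable_mult_right) (simp add: emeasure_eq_measure)
  qed simp
  also have "\<dots> = e + (d - e) * measure nu ?S"
    using coord_set[of 0 c] prob_space by (simp add: sets.Int_space_eq2)
  finally show ?thesis by simp
qed

end

lemma meas_one:
  assumes "prob_space nu" "G \<in> sets nu" "emeasure nu E = 0" "E \<in> sets nu" "space nu - E \<subseteq> G"
  shows "emeasure nu G = 1"
proof -
  interpret prob_space nu by fact
  have "1 = emeasure nu (space nu)" by (simp add: emeasure_space_1)
  also have "\<dots> \<le> emeasure nu (G \<union> E)" using assms by (intro emeasure_mono) auto
  also have "\<dots> \<le> emeasure nu G + emeasure nu E" using assms by (intro emeasure_subadditive) auto
  finally have "1 \<le> emeasure nu G" using assms by simp
  then show ?thesis using emeasure_le_1[of G] by (intro order.antisym) auto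
qed

lemma partI:
  assumes "sets nu = sets (Sigma_alpha M)" "prob_space nu" "shift_invariant nu" "shift_ergodic nu"
    "measure nu {z \<in> space nu. z 0 = AB} < 1/2"
  shows "emeasure nu (phi_alpha ` B_alpha M) = 1"
proof -
  interpret S: shsys nu "Aalph M" sa
  proof (rule shsys.intro)
    show "sets nu = sets (PiM UNIV (\<lambda>_. count_space (Aalph M)))" using assms(1) unfolding Sigma_alpha_def .
    show "prob_space nu" by fact
    show "shift_invariant nu" by fact
    show "shift_ergodic nu" by fact
    fix a show "sa a = 1 \<or> sa a = -1" by (cases a) auto
  qed
  have sp: "space nu = space (Sigma_alpha M)" using assms(1) by (rule sets_eq_imp_space_eq)
  have sf: "\<And>a. sa a = (if a = AB then -1 else 1)" by (case_tac a) auto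
  have "(\<integral>z. real_of_int (sa (z 0)) \<partial>nu) > 0" using S.int_sg[of AB "-1" 1, OF sf] assms(5) by simp
  then have E0: "emeasure nu S.Eb = 0" by (rule S.backward)
  have Gs: "G1 M \<in> sets nu"
  proof -
    have "G1 M = {z \<in> space nu. \<forall>i. z i = AB \<longrightarrow> (\<exists>j::int. 1 \<le> j \<and> Hg sa z (i-j+1) = Hg sa z (i+1))}"
      unfolding G1_def sp by auto
    also have "\<dots> \<in> sets nu"
    proof (rule predE, rule pred_intros_countable(1))
      fix i
      show "Measurable.pred nu (\<lambda>z. z i = AB \<longrightarrow> (\<exists>j::int. 1 \<le> j \<and> Hg sa z (i-j+1) = Hg sa z (i+1)))"
      proof (rule pred_intros_logic(4)[OF S.coord_pred], rule pred_intros_countable(2))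
        fix j :: int
        show "Measurable.pred nu (\<lambda>z. 1 \<le> j \<and> Hg sa z (i-j+1) = Hg sa z (i+1))"
          by (rule pred_intros_conj1') (rule S.Hg_eq_pred)
      qed
    qed
    finally show ?thesis .
  qed
  have sub: "space nu - S.Eb \<subseteq> G1 M"
  proof
    fix z assume z: "z \<in> space nu - S.Eb"
    then have nb: "\<And>n. \<not> S.Pb z n" unfolding S.Eb_def by auto
    have "\<forall>i. z i = AB \<longrightarrow> (\<exists>j\<ge>1. Hg sa z (i-j+1) = Hg sa z (i+1))"
    proof (intro allI impI)
      fix i assume zi: "z i = AB"
      let ?H = "Hg sa z"
      have hi: "?H (i+1) = ?H i - 1" using Hg_step[of sa z i] zi by simp
      define X where "X = \<bar>i\<bar> + \<bar>?H (i+1)\<bar> + 1"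
      have X0: "X \<ge> 0" unfolding X_def by simp
      have "\<not> S.Pb z (nat X)" by (rule nb)
      then have "\<exists>m. m \<le> 0 \<and> ?H m < - int (nat X)" unfolding S.Pb_def by (simp add: not_le)
      then obtain m where m: "m \<le> 0" "?H m < - X" using X0 by auto
      have lip: "\<bar>?H m\<bar> \<le> \<bar>m\<bar>" by (rule Hg_lip) (rule sa_abs)
      have mi: "m \<le> i"
      proof (rule ccontr)
        assume "\<not> m \<le> i"
        then have "\<bar>m\<bar> \<le> \<bar>i\<bar>" using m(1) by arith
        then show False using lip m(2) unfolding X_def by arith
      qed
      have hm: "?H m \<le> ?H (i+1)" using m(2) unfolding X_def by arith
      have "\<exists>t\<ge>m. t \<le> i \<and> ?H t = ?H (i+1)"
        by (rule ivt_up[of ?H m i "?H (i+1)"]) (use Hsa_step mi hi hm in auto)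
      then obtain t where t: "m \<le> t" "t \<le> i" "?H t = ?H (i+1)" by auto
      show "\<exists>j\<ge>1. ?H (i-j+1) = ?H (i+1)"
        by (rule exI[of _ "i - t + 1"]) (use t in simp)
    qed
    then show "z \<in> G1 M" using z sp unfolding G1_def by auto
  qed
  show ?thesis unfolding image1
    by (rule meas_one[OF assms(2) Gs E0 S.Eb_meas sub])
qed

lemma partII:
  assumes "sets nu = sets (Sigma_beta M)" "prob_space nu" "shift_invariant nu" "shift_ergodic nu"
    "measure nu {z \<in> space nu. z 0 = BA} < 1/2"
  shows "emeasure nu (phi_beta ` B_beta M) = 1"
proof -
  interpret S: shsys nu "Balph M" sb
  proof (rule shsys.intro)
    show "sets nu = sets (PiM UNIV (\<lambda>_. count_space (Balph M)))" using assms(1) unfolding Sigma_beta_def .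
    show "prob_space nu" by fact
    show "shift_invariant nu" by fact
    show "shift_ergodic nu" by fact
    fix a show "sb a = 1 \<or> sb a = -1" by (cases a) auto
  qed
  have sp: "space nu = space (Sigma_beta M)" using assms(1) by (rule sets_eq_imp_space_eq)
  have sf: "\<And>a. sb a = (if a = BA then 1 else -1)" by (case_tac a) auto
  have "(\<integral>z. real_of_int (sb (z 0)) \<partial>nu) < 0" using S.int_sg[of BA 1 "-1", OF sf] assms(5) by simp
  then have E0: "emeasure nu S.Ef = 0" by (rule S.forward)
  have Gs: "G2 M \<in> sets nu"
  proof -
    have "G2 M = {z \<in> space nu. \<forall>i. z i = BA \<longrightarrow> (\<exists>j::int. 1 \<le> j \<and> Hg sb z (i+j) = Hg sb z i)}"
      unfolding G2_def sp by auto
    also have "\<dots> \<in> sets nu"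
    proof (rule predE, rule pred_intros_countable(1))
      fix i
      show "Measurable.pred nu (\<lambda>z. z i = BA \<longrightarrow> (\<exists>j::int. 1 \<le> j \<and> Hg sb z (i+j) = Hg sb z i))"
      proof (rule pred_intros_logic(4)[OF S.coord_pred], rule pred_intros_countable(2))
        fix j :: int
        show "Measurable.pred nu (\<lambda>z. 1 \<le> j \<and> Hg sb z (i+j) = Hg sb z i)"
          by (rule pred_intros_conj1') (rule S.Hg_eq_pred)
      qed
    qed
    finally show ?thesis .
  qed
  have sub: "space nu - S.Ef \<subseteq> G2 M"
  proof
    fix z assume z: "z \<in> space nu - S.Ef"
    then have nb: "\<And>n. \<not> S.Pf z n" unfolding S.Ef_def by auto
    have "\<forall>i. z i = BA \<longrightarrow> (\<exists>j\<ge>1. Hg sb z (i+j) = Hg sb z i)"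
    proof (intro allI impI)
      fix i assume zi: "z i = BA"
      let ?H = "Hg sb z"
      have hi: "?H (i+1) = ?H i + 1" using Hg_step[of sb z i] zi by simp
      define X where "X = \<bar>i\<bar> + \<bar>?H i\<bar> + 1"
      have X0: "X \<ge> 0" unfolding X_def by simp
      have "\<not> S.Pf z (nat X)" by (rule nb)
      then have "\<exists>m. 0 \<le> m \<and> ?H m < - int (nat X)" unfolding S.Pf_def by (simp add: not_le)
      then obtain m where m: "0 \<le> m" "?H m < - X" using X0 by auto
      have lip: "\<bar>?H m\<bar> \<le> \<bar>m\<bar>" by (rule Hg_lip) (rule sb_abs)
      have mi: "i + 1 \<le> m"
      proof (rule ccontr)
        assume "\<not> i + 1 \<le> m"
        then have "\<bar>m\<bar> \<le> \<bar>i\<bar>" using m(1) by arith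
        then show False using lip m(2) unfolding X_def by arith
      qed
      have hm: "?H m \<le> ?H i" using m(2) unfolding X_def by arith
      have "\<exists>t\<ge>i+1. t \<le> m \<and> ?H t = ?H i"
        by (rule ivt_down[of ?H "i+1" m "?H i"]) (use Hsb_step mi hi hm in auto)
      then obtain t where t: "i + 1 \<le> t" "t \<le> m" "?H t = ?H i" by auto
      show "\<exists>j\<ge>1. ?H (i+j) = ?H i"
        by (rule exI[of _ "t - i"]) (use t in simp)
    qed
    then show "z \<in> G2 M" using z sp unfolding G2_def by auto
  qed
  show ?thesis unfolding image2
    by (rule meas_one[OF assms(2) Gs E0 S.Ef_meas sub])
qed

theorem mainTheorem6:
  fixes M :: nat
  assumes "M \<ge> 2"
  shows "(\<forall>\<nu> :: (int \<Rightarrow> asym) measure.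
            sets \<nu> = sets (Sigma_alpha M) \<and> prob_space \<nu> \<and>
            shift_invariant \<nu> \<and> shift_ergodic \<nu> \<and>
            measure \<nu> {\<zeta> \<in> space \<nu>. \<zeta> 0 = AB} < 1/2
          \<longrightarrow> emeasure \<nu> (phi_alpha ` B_alpha M) = 1)
       \<and> (\<forall>\<nu> :: (int \<Rightarrow> bsym) measure.
            sets \<nu> = sets (Sigma_beta M) \<and> prob_space \<nu> \<and>
            shift_invariant \<nu> \<and> shift_ergodic \<nu> \<and>
            measure \<nu> {\<zeta> \<in> space \<nu>. \<zeta> 0 = BA} < 1/2
          \<longrightarrow> emeasure \<nu> (phi_beta ` B_beta M) = 1)"
  using partI partII by blast

end
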